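(* Let $(X,\mathtt{d})$ be a finite metric space with $X=\bigsqcup_{i=1}^sX_i$, and consider $k$-center clustering with $z$ outliers on $X$ with optimal radius $r_{\mathtt{opt}}$ and an optimal outlier set $O=\bigsqcup_{i=1}^sO_i$ with $O_i\subseteq X_i$ and $z_i^*=|O_i|$. Then $2r_{\mathtt{opt}}\geq\max_{1\leq i\leq s}r_{\mathtt{opt}}(X_i,k,z_i^* )$.
   Context: For a finite metric set $Y$ of size $N$ and integer $0\leq w<N$, $r_{\mathtt{opt}}(Y,k,w)$ denotes the optimal value of $k$-center clustering with $w$ outliers on $Y$: the minimum over $Y'\subseteq Y$ with $|Y'|\geq N-w$ and centers $c_1,\dots,c_k\in Y$ of $\max_{p\in Y'}\min_j\mathtt{d}(p,c_j)$. $r_{\mathtt{opt}}=r_{\mathtt{opt}}(X,k,z)$, and $O$ is the set of $z$ points excluded by a fixed optimal solution on $X$. *)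

theory Defs
  imports "HOL-Analysis.Analysis"
begin

definition kc_cost :: "'a::metric_space set \<Rightarrow> nat \<Rightarrow> (nat \<Rightarrow> 'a) \<Rightarrow> real" where
  "kc_cost Y' k c = Max (insert 0 ((\<lambda>p. Min ((\<lambda>j. dist p (c j)) ` {..<k})) ` Y'))"

definition r_opt :: "'a::metric_space set \<Rightarrow> nat \<Rightarrow> nat \<Rightarrow> real" where
  "r_opt Y k w = Min {kc_cost Y' k c | Y' c.
      Y' \<subseteq> Y \<and> card Y' \<ge> card Y - w \<and> c ` {..<k} \<subseteq> Y}"

end

theory Submission
  imports Defs
begin

lemma kc_cost_restrict: "kc_cost Y' k c = kc_cost Y' k (restrict c {..<k})"
  unfolding kc_cost_def by (intro arg_cong[where f=Max] arg_cong[where f="insert 0"] image_cong refl) auto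

lemma finite_costs:
  assumes "finite Y"
  shows "finite {kc_cost Y' k c | Y' c. Y' \<subseteq> Y \<and> card Y' \<ge> card Y - w \<and> c ` {..<k} \<subseteq> Y}"
proof -
  have "{kc_cost Y' k c | Y' c. Y' \<subseteq> Y \<and> card Y' \<ge> card Y - w \<and> c ` {..<k} \<subseteq> Y}
        \<subseteq> (\<lambda>(Y', f). kc_cost Y' k f) ` (Pow Y \<times> PiE {..<k} (\<lambda>_. Y))"
  proof
    fix x assume "x \<in> {kc_cost Y' k c | Y' c. Y' \<subseteq> Y \<and> card Y' \<ge> card Y - w \<and> c ` {..<k} \<subseteq> Y}"
    then obtain Y' c where h: "x = kc_cost Y' k c" "Y' \<subseteq> Y" "c ` {..<k} \<subseteq> Y" by blast
    have "restrict c {..<k} \<in> PiE {..<k} (\<lambda>_. Y)" using h(3) by auto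
    then show "x \<in> (\<lambda>(Y', f). kc_cost Y' k f) ` (Pow Y \<times> PiE {..<k} (\<lambda>_. Y))"
      using h kc_cost_restrict by (intro image_eqI[where x="(Y', restrict c {..<k})"]) auto
  qed
  moreover have "finite (Pow Y \<times> PiE {..<k} (\<lambda>_. Y))"
    using assms by (intro finite_cartesian_product finite_PiE) auto
  ultimately show ?thesis by (meson finite_imageI finite_subset)
qed

lemma r_opt_le:
  assumes "finite Y" "Y' \<subseteq> Y" "card Y' \<ge> card Y - w" "c ` {..<k} \<subseteq> Y"
  shows "r_opt Y k w \<le> kc_cost Y' k c"
  unfolding r_opt_def using assms by (intro Min_le finite_costs) blast+

lemma kc_cost_nonneg:
  assumes "finite Y'" shows "0 \<le> kc_cost Y' k c"
  unfolding kc_cost_def using assms by (intro Max_ge) auto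

lemma kc_cost_ge:
  assumes "finite Y'" "p \<in> Y'" "k \<ge> 1"
  shows "\<exists>j<k. dist p (c j) \<le> kc_cost Y' k c"
proof -
  have ne: "(\<lambda>j. dist p (c j)) ` {..<k} \<noteq> {}" using assms by (auto simp: lessThan_empty_iff)
  obtain j where j: "j < k" "Min ((\<lambda>j. dist p (c j)) ` {..<k}) = dist p (c j)"
    using Min_in[OF _ ne] by auto
  have "Min ((\<lambda>j. dist p (c j)) ` {..<k}) \<le> kc_cost Y' k c"
    unfolding kc_cost_def using assms by (intro Max_ge) auto
  then show ?thesis using j by auto
qed

lemma kc_cost_le:
  assumes "finite Y'" "r \<ge> 0" "\<And>p. p \<in> Y' \<Longrightarrow> \<exists>j<k. dist p (c j) \<le> r"
  shows "kc_cost Y' k c \<le> r"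
  unfolding kc_cost_def
proof (subst Max_le_iff)
  show "\<forall>a\<in>insert 0 ((\<lambda>p. Min ((\<lambda>j. dist p (c j)) ` {..<k})) ` Y'). a \<le> r"
  proof
    fix a assume "a \<in> insert 0 ((\<lambda>p. Min ((\<lambda>j. dist p (c j)) ` {..<k})) ` Y')"
    then consider "a = 0" | p where "p \<in> Y'" "a = Min ((\<lambda>j. dist p (c j)) ` {..<k})" by auto
    then show "a \<le> r"
    proof cases
      case 1 then show ?thesis using assms by simp
    next
      case 2
      then obtain j where "j < k" "dist p (c j) \<le> r" using assms(3) by blast
      then show ?thesis using 2 by (meson Min_le finite_imageI finite_lessThan image_eqI lessThan_iff order_trans)
    qed
  qed
qed (use assms in auto)

theorem lemma18:
  fixes X :: "'a::metric_space set" and Xs :: "nat \<Rightarrow> 'a set"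
    and s k z :: nat and Out :: "'a set"
  assumes "finite X"
    and "k \<ge> 1" and "z < card X"
    and "s \<ge> 1"
    and "X = (\<Union>i\<in>{1..s}. Xs i)"
    and "\<And>i j. i \<in> {1..s} \<Longrightarrow> j \<in> {1..s} \<Longrightarrow> i \<noteq> j \<Longrightarrow> Xs i \<inter> Xs j = {}"
    and "\<And>i. i \<in> {1..s} \<Longrightarrow> Xs i \<noteq> {}"
    and "Out \<subseteq> X" and "card Out = z"
    and "\<exists>c. c ` {..<k} \<subseteq> X \<and> kc_cost (X - Out) k c = r_opt X k z"
  shows "2 * r_opt X k z \<ge> Max ((\<lambda>i. r_opt (Xs i) k (card (Out \<inter> Xs i))) ` {1..s})"
proof -
  obtain c where c: "c ` {..<k} \<subseteq> X" "kc_cost (X - Out) k c = r_opt X k z" using assms(10) by blast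
  define r where "r = r_opt X k z"
  have r0: "r \<ge> 0" using kc_cost_nonneg[of "X - Out" k c] assms(1) c(2) r_def by simp
  have bound: "r_opt (Xs i) k (card (Out \<inter> Xs i)) \<le> 2 * r" if i: "i \<in> {1..s}" for i
  proof -
    have fin: "finite (Xs i)" using assms(1,5) i by auto
    have sub: "Xs i \<subseteq> X" using assms(5) i by auto
    obtain q0 where q0: "q0 \<in> Xs i" using assms(7)[OF i] by blast
    define c' where "c' j = (if \<exists>p\<in>Xs i - Out. dist p (c j) \<le> r
        then SOME p. p \<in> Xs i - Out \<and> dist p (c j) \<le> r else q0)" for j
    have c'in: "c' j \<in> Xs i" for j
    proof (cases "\<exists>p\<in>Xs i - Out. dist p (c j) \<le> r")
      case True
      then have "(SOME p. p \<in> Xs i - Out \<and> dist p (c j) \<le> r) \<in> Xs i - Out"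
        by (metis (mono_tags, lifting) someI_ex)
      then show ?thesis using True c'_def by simp
    qed (use q0 c'_def in simp)
    have cov: "\<exists>j<k. dist p (c' j) \<le> 2 * r" if p: "p \<in> Xs i - Out" for p
    proof -
      have "p \<in> X - Out" using p sub by auto
      then obtain j where j: "j < k" "dist p (c j) \<le> r"
        using kc_cost_ge[of "X - Out" p k c] assms(1,2) c(2) r_def by auto
      then have ex: "\<exists>p\<in>Xs i - Out. dist p (c j) \<le> r" using p by blast
      then have "dist (c' j) (c j) \<le> r"
        unfolding c'_def using someI_ex[of "\<lambda>p. p \<in> Xs i - Out \<and> dist p (c j) \<le> r"] by auto
      then have "dist p (c' j) \<le> 2 * r"
        using j dist_triangle[of p "c' j" "c j"] dist_commute[of "c' j" "c j"] by linarith
      then show ?thesis using j by blast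
    qed
    have card: "card (Xs i - Out) \<ge> card (Xs i) - card (Out \<inter> Xs i)"
      using card_Diff_subset_Int[of "Xs i" Out] fin by (simp add: Int_commute)
    have "r_opt (Xs i) k (card (Out \<inter> Xs i)) \<le> kc_cost (Xs i - Out) k c'"
      using fin card c'in by (intro r_opt_le) auto
    also have "\<dots> \<le> 2 * r" using fin r0 cov by (intro kc_cost_le) auto
    finally show ?thesis .
  qed
  show ?thesis unfolding r_def[symmetric]
    using assms(4) bound by (subst Max_le_iff) auto
qed

end
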